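(* Let $f\in\mathbb R[x_1,\dots,x_n]$ satisfy conditions (C1), (C2), (C3) and let $\lambda_f$ be a map of minimal barycentric coordinates of $f$. If \[ \sum_{\alpha^\star\in D(f)\cap(2\mathbb N_0^n)^c}\frac{|f_{\alpha^\star}|}{\Theta(f,\lambda_f,\alpha^\star)}-\sum_{\alpha^\star\in D(f)\cap 2\mathbb N_0^n}\frac{\min\{0,f_{\alpha^\star}\}}{\Theta(f,\lambda_f,\alpha^\star)}<1, \] then $f$ is coercive on $\mathbb R^n$, i.e. $f(x)\to+\infty$ whenever $\|x\|\to+\infty$.
   Context: Notation: $\mathbb N_0=\mathbb N\cup\{0\}$, $[n]=\{1,\dots,n\}$, $e_i$ the standard unit vectors, $(2\mathbb N_0^n)^c=\mathbb N_0^n\setminus 2\mathbb N_0^n$. Write $f(x)=\sum_{\alpha\in A(f)}f_\alpha x^\alpha$ with $A(f)\subseteq\mathbb N_0^n$ finite and $f_\alpha\neq0$ for $\alpha\in A(f)$. The Newton polytope at infinity is $\mathrm{New}_\infty(f)=\mathrm{conv}(A(f)\cup\{0\})$; $V_0(f)$ is its vertex set (it contains $0$), $V(f)=V_0(f)\setminus\{0\}$, $V_0^c(f)=A(f)\setminus V_0(f)$, $V^c(f)=A(f)\setminus V(f)$. Conditions: (C1) $V(f)\subset 2\mathbb N_0^n$; (C2) $f_\alpha>0$ for all $\alpha\in V(f)$; (C3) for every $i\in[n]$, $V(f)$ contains a vector $2k_ie_i$ with $k_i\in\mathbb N$. Let $\mathcal G(f)$ be the set of nonempty faces $G$ of $\mathrm{New}_\infty(f)$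 with $0\notin G$. An exponent $\alpha\in A(f)$ is gem degenerate if $\alpha\in V^c(f)\cap G$ for some $G\in\mathcal G(f)$; $D(f)$ is the set of gem degenerate exponents. A map of minimal barycentric coordinates of $f$ is a map $\lambda_f:V_0^c(f)\times V_0(f)\to[0,1]$ such that for each $\alpha^\star\in V_0^c(f)$ there is an affinely independent set $W_{\alpha^\star}\subseteq V_0(f)$ with $\lambda_f(\alpha^\star,\alpha)>0$ for $\alpha\in W_{\alpha^\star}$, $\lambda_f(\alpha^\star,\alpha)=0$ for $\alpha\in V_0(f)\setminus W_{\alpha^\star}$, and $\sum_{\alpha\in W_{\alpha^\star}}\lambda_f(\alpha^\star,\alpha)(\alpha,1)=(\alpha^\star,1)$. Write $W_{\alpha^\star}(\lambda_f)=\{\alpha\in V_0(f):\lambda_f(\alpha^\star,\alpha)>0\}$. The circuit number is $\Theta(f,\lambda_f,\alpha^\star)=\prod_{\alpha\in W_{\alpha^\star}(\lambda_f)}\bigl(f_\alpha/\lambda_f(\alpha^\star,\alpha)\bigr)^{\lambda_f(\alpha^\star,\alpha)}$; under (C2),(C3) it is positive for every $\alpha^\star\in D(f)$. *)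

theory Defs
  imports "HOL-Analysis.Analysis"
begin

text \<open>A real polynomial in the variables indexed by the finite type 'n is given by its
coefficient function c on exponent vectors ('n => nat), with finite support A(f).\<close>

definition supp_poly :: "(('n \<Rightarrow> nat) \<Rightarrow> real) \<Rightarrow> ('n \<Rightarrow> nat) set" where
  "supp_poly c = {\<alpha>. c \<alpha> \<noteq> 0}"

definition is_poly :: "(('n \<Rightarrow> nat) \<Rightarrow> real) \<Rightarrow> bool" where
  "is_poly c \<longleftrightarrow> finite (supp_poly c)"

definition peval :: "(('n::finite \<Rightarrow> nat) \<Rightarrow> real) \<Rightarrow> real^'n \<Rightarrow> real" where
  "peval c x = (\<Sum>\<alpha>\<in>supp_poly c. c \<alpha> * (\<Prod>i\<in>UNIV. (x$i) ^ (\<alpha> i)))"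

definition emb :: "('n::finite \<Rightarrow> nat) \<Rightarrow> real^'n" where
  "emb \<alpha> = (\<chi> i. real (\<alpha> i))"

definition newton_inf :: "(('n::finite \<Rightarrow> nat) \<Rightarrow> real) \<Rightarrow> (real^'n) set" where
  "newton_inf c = convex hull (emb ` (supp_poly c \<union> {(\<lambda>_. 0)}))"

definition V0 :: "(('n::finite \<Rightarrow> nat) \<Rightarrow> real) \<Rightarrow> ('n \<Rightarrow> nat) set" where
  "V0 c = {\<alpha> \<in> supp_poly c \<union> {(\<lambda>_. 0)}. emb \<alpha> extreme_point_of newton_inf c}"

definition Vv :: "(('n::finite \<Rightarrow> nat) \<Rightarrow> real) \<Rightarrow> ('n \<Rightarrow> nat) set" where
  "Vv c = V0 c - {(\<lambda>_. 0)}"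

definition V0c :: "(('n::finite \<Rightarrow> nat) \<Rightarrow> real) \<Rightarrow> ('n \<Rightarrow> nat) set" where
  "V0c c = supp_poly c - V0 c"

definition Vc :: "(('n::finite \<Rightarrow> nat) \<Rightarrow> real) \<Rightarrow> ('n \<Rightarrow> nat) set" where
  "Vc c = supp_poly c - Vv c"

definition Gfaces :: "(('n::finite \<Rightarrow> nat) \<Rightarrow> real) \<Rightarrow> (real^'n) set set" where
  "Gfaces c = {G. G face_of newton_inf c \<and> G \<noteq> {} \<and> (0::real^'n) \<notin> G}"

definition gem_deg :: "(('n::finite \<Rightarrow> nat) \<Rightarrow> real) \<Rightarrow> ('n \<Rightarrow> nat) set" where
  "gem_deg c = {\<alpha> \<in> Vc c. \<exists>G\<in>Gfaces c. emb \<alpha> \<in> G}"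

definition even_mon :: "('n \<Rightarrow> nat) \<Rightarrow> bool" where
  "even_mon \<alpha> \<longleftrightarrow> (\<forall>i. even (\<alpha> i))"

definition C1 :: "(('n::finite \<Rightarrow> nat) \<Rightarrow> real) \<Rightarrow> bool" where
  "C1 c \<longleftrightarrow> (\<forall>\<alpha>\<in>Vv c. even_mon \<alpha>)"

definition C2 :: "(('n::finite \<Rightarrow> nat) \<Rightarrow> real) \<Rightarrow> bool" where
  "C2 c \<longleftrightarrow> (\<forall>\<alpha>\<in>Vv c. c \<alpha> > 0)"

definition C3 :: "(('n::finite \<Rightarrow> nat) \<Rightarrow> real) \<Rightarrow> bool" where
  "C3 c \<longleftrightarrow> (\<forall>i. \<exists>k::nat. k > 0 \<and> (\<lambda>j. if j = i then 2 * k else 0) \<in> Vv c)"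

text \<open>Map of minimal barycentric coordinates (only its values on V0^c x V0 matter).\<close>
definition bary_support ::
  "(('n::finite \<Rightarrow> nat) \<Rightarrow> real) \<Rightarrow> (('n \<Rightarrow> nat) \<Rightarrow> ('n \<Rightarrow> nat) \<Rightarrow> real) \<Rightarrow> ('n \<Rightarrow> nat) \<Rightarrow> ('n \<Rightarrow> nat) set" where
  "bary_support c lam a = {\<alpha> \<in> V0 c. lam a \<alpha> > 0}"

definition min_bary_map ::
  "(('n::finite \<Rightarrow> nat) \<Rightarrow> real) \<Rightarrow> (('n \<Rightarrow> nat) \<Rightarrow> ('n \<Rightarrow> nat) \<Rightarrow> real) \<Rightarrow> bool" where
  "min_bary_map c lam \<longleftrightarrow>
     (\<forall>a\<in>V0c c.
        (\<forall>\<alpha>\<in>V0 c. 0 \<le> lam a \<alpha> \<and> lam a \<alpha> \<le> 1) \<and>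
        \<not> affine_dependent (emb ` bary_support c lam a) \<and>
        (\<Sum>\<alpha>\<in>bary_support c lam a. lam a \<alpha>) = 1 \<and>
        (\<Sum>\<alpha>\<in>bary_support c lam a. lam a \<alpha> *\<^sub>R emb \<alpha>) = emb a)"

definition circuit_number ::
  "(('n::finite \<Rightarrow> nat) \<Rightarrow> real) \<Rightarrow> (('n \<Rightarrow> nat) \<Rightarrow> ('n \<Rightarrow> nat) \<Rightarrow> real) \<Rightarrow> ('n \<Rightarrow> nat) \<Rightarrow> real" where
  "circuit_number c lam a =
     (\<Prod>\<alpha>\<in>bary_support c lam a. (c \<alpha> / lam a \<alpha>) powr (lam a \<alpha>))"

end

theory Submission
  imports Defs
begin

definition absmon :: "real^'n::finite \<Rightarrow> ('n \<Rightarrow> nat) \<Rightarrow> real" where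
  "absmon x a = (\<Prod>i\<in>UNIV. \<bar>x$i\<bar> ^ a i)"

lemma absmon_nonneg: "absmon x a \<ge> 0"
  unfolding absmon_def by (simp add: prod_nonneg)

lemma absmon_J:
  fixes x :: "real^'n::finite"
  assumes "\<forall>i. x$i = 0 \<longrightarrow> g i = 0"
  shows "absmon x g = (\<Prod>i\<in>{i. x$i \<noteq> 0}. \<bar>x$i\<bar> powr real (g i))"
proof -
  have "absmon x g = (\<Prod>i\<in>{i. x$i \<noteq> 0}. \<bar>x$i\<bar> ^ g i)"
    unfolding absmon_def
    by (rule prod.mono_neutral_right) (use assms in auto)
  also have "\<dots> = (\<Prod>i\<in>{i. x$i \<noteq> 0}. \<bar>x$i\<bar> powr real (g i))"
    by (rule prod.cong) (auto simp: powr_realpow)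
  finally show ?thesis .
qed

lemma absmon_powr:
  fixes x :: "real^'n::finite" and W :: "('n \<Rightarrow> nat) set"
  assumes W: "finite W" and wpos: "\<forall>\<alpha>\<in>W. w \<alpha> > 0"
    and comb: "\<forall>i. real (a i) = (\<Sum>\<alpha>\<in>W. w \<alpha> * real (\<alpha> i))"
  shows "absmon x a = (\<Prod>\<alpha>\<in>W. absmon x \<alpha> powr w \<alpha>)"
proof (cases "\<exists>i. x$i = 0 \<and> a i > 0")
  case True
  then obtain i where i: "x$i = 0" "a i > 0" by blast
  have ai: "real (a i) > 0" using i(2) by simp
  have "(\<Sum>\<alpha>\<in>W. w \<alpha> * real (\<alpha> i)) > 0" using ai comb[rule_format, of i] by linarith
  then have "\<exists>\<alpha>\<in>W. w \<alpha> * real (\<alpha> i) \<noteq> 0"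
  proof (rule contrapos_pp)
    assume "\<not> (\<exists>\<alpha>\<in>W. w \<alpha> * real (\<alpha> i) \<noteq> 0)"
    then have "(\<Sum>\<alpha>\<in>W. w \<alpha> * real (\<alpha> i)) = 0" by (intro sum.neutral) blast
    then show "\<not> (\<Sum>\<alpha>\<in>W. w \<alpha> * real (\<alpha> i)) > 0" by simp
  qed
  then obtain \<alpha> where \<alpha>: "\<alpha> \<in> W" "w \<alpha> * real (\<alpha> i) \<noteq> 0" by blast
  then have "\<alpha> i > 0" by auto
  have "\<exists>j\<in>UNIV. \<bar>x$j\<bar> ^ (\<alpha> j) = 0" using i \<open>\<alpha> i > 0\<close> by (intro bexI[of _ i]) auto
  then have "absmon x \<alpha> = 0" by (simp add: absmon_def prod_zero_iff)
  then have "\<exists>\<beta>\<in>W. absmon x \<beta> powr w \<beta> = 0" using \<alpha> by (intro bexI[of _ \<alpha>]) auto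
  then have r: "(\<Prod>\<alpha>\<in>W. absmon x \<alpha> powr w \<alpha>) = 0" using W by (simp add: prod_zero_iff)
  have "\<exists>j\<in>UNIV. \<bar>x$j\<bar> ^ (a j) = 0" using i by (intro bexI[of _ i]) auto
  then have "absmon x a = 0" by (simp add: absmon_def prod_zero_iff)
  with r show ?thesis by simp
next
  case False
  define J where "J = {i. x$i \<noteq> 0}"
  have z: "\<alpha> i = 0" if "\<alpha> \<in> W" "x$i = 0" for \<alpha> i
  proof -
    have "a i = 0" using False that by auto
    then have "(\<Sum>\<alpha>\<in>W. w \<alpha> * real (\<alpha> i)) = 0" using comb[rule_format, of i] by simp
    then have "\<forall>\<beta>\<in>W. w \<beta> * real (\<beta> i) = 0"
      using sum_nonneg_eq_0_iff[OF W] wpos by (smt (verit) mult_nonneg_nonneg of_nat_0_le_iff)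
    then have "w \<alpha> * real (\<alpha> i) = 0" using that by blast
    moreover have "w \<alpha> > 0" using that wpos by blast
    ultimately show ?thesis by simp
  qed
  have "(\<Prod>\<alpha>\<in>W. absmon x \<alpha> powr w \<alpha>)
      = (\<Prod>\<alpha>\<in>W. (\<Prod>i\<in>J. \<bar>x$i\<bar> powr real (\<alpha> i)) powr w \<alpha>)"
    by (rule prod.cong) (use z absmon_J[of x] in \<open>auto simp: J_def\<close>)
  also have "\<dots> = (\<Prod>\<alpha>\<in>W. \<Prod>i\<in>J. \<bar>x$i\<bar> powr (w \<alpha> * real (\<alpha> i)))"
    by (simp add: prod_powr_distrib powr_powr mult.commute)
  also have "\<dots> = (\<Prod>i\<in>J. \<Prod>\<alpha>\<in>W. \<bar>x$i\<bar> powr (w \<alpha> * real (\<alpha> i)))"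
    by (rule prod.swap)
  also have "\<dots> = (\<Prod>i\<in>J. \<bar>x$i\<bar> powr (\<Sum>\<alpha>\<in>W. w \<alpha> * real (\<alpha> i)))"
    by (rule prod.cong) (auto simp: J_def powr_sum)
  also have "\<dots> = absmon x a"
    using absmon_J[of x a] False comb by (simp add: J_def)
  finally show ?thesis by simp
qed


lemma weighted_amgm:
  fixes y l :: "'a \<Rightarrow> real"
  assumes S: "finite S" "S \<noteq> {}" and lpos: "\<And>i. i \<in> S \<Longrightarrow> l i > 0"
    and lsum: "(\<Sum>i\<in>S. l i) = 1" and ynn: "\<And>i. i \<in> S \<Longrightarrow> y i \<ge> 0"
  shows "(\<Prod>i\<in>S. y i powr l i) \<le> (\<Sum>i\<in>S. l i * y i)"
proof (cases "\<exists>i\<in>S. y i = 0")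
  case True
  then have "(\<Prod>i\<in>S. y i powr l i) = 0" using S by (auto simp: prod_zero_iff)
  moreover have "(\<Sum>i\<in>S. l i * y i) \<ge> 0"
    using lpos ynn by (intro sum_nonneg) (simp add: less_imp_le)
  ultimately show ?thesis by simp
next
  case False
  then have ypos: "\<And>i. i \<in> S \<Longrightarrow> y i > 0" using ynn by (metis less_eq_real_def)
  have "ln (\<Sum>i\<in>S. l i *\<^sub>R y i) \<ge> (\<Sum>i\<in>S. l i * ln (y i))"
    by (rule concave_on_sum[OF S ln_concave lsum]) (use lpos ypos in \<open>auto simp: less_imp_le\<close>)
  moreover have pos: "(\<Sum>i\<in>S. l i *\<^sub>R y i) > 0"
    using S lpos ypos by (simp add: sum_pos)
  ultimately have "exp (\<Sum>i\<in>S. l i * ln (y i)) \<le> (\<Sum>i\<in>S. l i * y i)"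
    using ln_ge_iff by auto
  moreover have "exp (\<Sum>i\<in>S. l i * ln (y i)) = (\<Prod>i\<in>S. y i powr l i)"
    unfolding exp_sum[OF S(1)]
  proof (rule prod.cong)
    fix i assume "i \<in> S"
    then have "y i > 0" by (rule ypos)
    then show "exp (l i * ln (y i)) = y i powr l i" by (simp add: powr_def mult.commute)
  qed simp
  ultimately show ?thesis by simp
qed


lemma emb_nth [simp]: "emb \<alpha> $ i = real (\<alpha> i)"
  by (simp add: emb_def)

lemma emb_inj: "emb \<alpha> = emb \<beta> \<Longrightarrow> \<alpha> = \<beta>"
  by (auto simp: vec_eq_iff fun_eq_iff)

lemma emb_zero [simp]: "emb (\<lambda>_. 0) = 0"
  by (simp add: vec_eq_iff)

lemma emb_eq_0_iff: "emb \<alpha> = 0 \<longleftrightarrow> \<alpha> = (\<lambda>_. 0)"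
  using emb_inj emb_zero by metis

lemma newton_polytope:
  assumes "is_poly c"
  shows "polytope (newton_inf c)"
  unfolding polytope_def newton_inf_def
  using assms by (intro exI[of _ "emb ` (supp_poly c \<union> {(\<lambda>_. 0)})"]) (auto simp: is_poly_def)

lemma newton_convex: "convex (newton_inf c)"
  by (simp add: newton_inf_def)

lemma newton_compact: "is_poly c \<Longrightarrow> compact (newton_inf c)"
  unfolding newton_inf_def is_poly_def by (intro finite_imp_compact_convex_hull) auto

lemma emb_in_newton: "\<alpha> \<in> supp_poly c \<union> {(\<lambda>_. 0)} \<Longrightarrow> emb \<alpha> \<in> newton_inf c"
  unfolding newton_inf_def by (rule hull_inc) auto

lemma zero_in_newton: "(0::real^'n::finite) \<in> newton_inf (c::('n \<Rightarrow> nat) \<Rightarrow> real)"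
  using emb_in_newton[of "\<lambda>_. 0" c] by simp

lemma V0_sub: "V0 c \<subseteq> supp_poly c \<union> {(\<lambda>_. 0)}"
  by (auto simp: V0_def)

lemma V0_finite: "is_poly c \<Longrightarrow> finite (V0 c)"
  using V0_sub[of c] by (auto simp: is_poly_def intro: finite_subset)

lemma Vv_sub: "Vv c \<subseteq> supp_poly c"
  using V0_sub[of c] by (auto simp: Vv_def)

lemma newton_hull_V0:
  assumes "is_poly c"
  shows "newton_inf c = convex hull (emb ` V0 c)"
proof -
  have ext: "{x. x extreme_point_of newton_inf c} = emb ` V0 c"
  proof
    show "{x. x extreme_point_of newton_inf c} \<subseteq> emb ` V0 c"
    proof
      fix x assume "x \<in> {x. x extreme_point_of newton_inf c}"
      then have x: "x extreme_point_of newton_inf c" by simp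
      then have "x \<in> emb ` (supp_poly c \<union> {(\<lambda>_. 0)})"
        unfolding newton_inf_def by (rule extreme_point_of_convex_hull)
      then obtain \<alpha> where "\<alpha> \<in> supp_poly c \<union> {(\<lambda>_. 0)}" "x = emb \<alpha>" by blast
      with x show "x \<in> emb ` V0 c" by (auto simp: V0_def)
    qed
    show "emb ` V0 c \<subseteq> {x. x extreme_point_of newton_inf c}"
      by (auto simp: V0_def)
  qed
  show ?thesis
    using Krein_Milman_Minkowski[OF newton_compact[OF assms] newton_convex] ext by simp
qed

lemma gem_deg_exposed:
  assumes "is_poly c" and "a \<in> gem_deg c"
  obtains u b where "\<forall>y\<in>newton_inf c. u \<bullet> y \<le> b" "u \<bullet> emb a = b" "b \<noteq> 0"
proof -
  obtain G where G: "G \<in> Gfaces c" "emb a \<in> G" using assms(2) by (auto simp: gem_deg_def)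
  have poly: "polyhedron (newton_inf c)"
    by (rule polytope_imp_polyhedron[OF newton_polytope[OF assms(1)]])
  have "G face_of newton_inf c" "0 \<notin> G" using G(1) by (auto simp: Gfaces_def)
  then have "G exposed_face_of newton_inf c" using exposed_face_of_polyhedron[OF poly] by blast
  then obtain u b where ub: "newton_inf c \<subseteq> {x. u \<bullet> x \<le> b}" "G = newton_inf c \<inter> {x. u \<bullet> x = b}"
    by (auto simp: exposed_face_of_def)
  have "b \<noteq> 0" using \<open>0 \<notin> G\<close> ub(2) zero_in_newton[of c] by auto
  moreover have "u \<bullet> emb a = b" using G(2) ub(2) by auto
  ultimately show ?thesis using that ub(1) by auto
qed

lemma gem_deg_V0c: "a \<in> gem_deg c \<Longrightarrow> a \<in> V0c c"
proof -
  assume a: "a \<in> gem_deg c"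
  then obtain G where G: "G \<in> Gfaces c" "emb a \<in> G" by (auto simp: gem_deg_def)
  have "a \<noteq> (\<lambda>_. 0)" using G by (auto simp: Gfaces_def)
  then show ?thesis using a by (auto simp: gem_deg_def Vc_def V0c_def Vv_def)
qed

lemma gem_deg_support:
  assumes "is_poly c" and a: "a \<in> gem_deg c" and mb: "min_bary_map c lam"
  shows "bary_support c lam a \<subseteq> Vv c"
proof
  fix \<alpha> assume \<alpha>W: "\<alpha> \<in> bary_support c lam a"
  obtain u b where ub: "\<forall>y\<in>newton_inf c. u \<bullet> y \<le> b" "u \<bullet> emb a = b" "b \<noteq> 0"
    using gem_deg_exposed[OF assms(1,2)] by blast
  define W where "W = bary_support c lam a"
  have W0: "W \<subseteq> V0 c" by (simp add: W_def bary_support_def)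
  have fin: "finite W" using W0 V0_finite[OF assms(1)] finite_subset by blast
  have aV: "a \<in> V0c c" using gem_deg_V0c[OF a] .
  have mbA: "(\<Sum>\<alpha>\<in>bary_support c lam a. lam a \<alpha>) = 1 \<and>
        (\<Sum>\<alpha>\<in>bary_support c lam a. lam a \<alpha> *\<^sub>R emb \<alpha>) = emb a"
    using mb aV unfolding min_bary_map_def by blast
  have sum1: "(\<Sum>\<beta>\<in>W. lam a \<beta>) = 1" and comb: "(\<Sum>\<beta>\<in>W. lam a \<beta> *\<^sub>R emb \<beta>) = emb a"
    using mbA unfolding W_def by blast+
  have pos: "\<And>\<beta>. \<beta> \<in> W \<Longrightarrow> lam a \<beta> > 0" by (simp add: W_def bary_support_def)
  have le: "u \<bullet> emb \<beta> \<le> b" if "\<beta> \<in> W" for \<beta>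
  proof -
    have "\<beta> \<in> supp_poly c \<union> {(\<lambda>_. 0)}" using that W0 V0_sub by blast
    then have "emb \<beta> \<in> newton_inf c" by (rule emb_in_newton)
    then show ?thesis using ub(1) by blast
  qed
  have i1: "u \<bullet> (\<Sum>\<beta>\<in>W. lam a \<beta> *\<^sub>R emb \<beta>) = (\<Sum>\<beta>\<in>W. lam a \<beta> * (u \<bullet> emb \<beta>))"
    by (simp add: inner_sum_right)
  have i2: "(\<Sum>\<beta>\<in>W. lam a \<beta> * (b - u \<bullet> emb \<beta>)) = (\<Sum>\<beta>\<in>W. lam a \<beta> * b) - (\<Sum>\<beta>\<in>W. lam a \<beta> * (u \<bullet> emb \<beta>))"
    by (simp add: right_diff_distrib sum_subtractf)
  have i3: "(\<Sum>\<beta>\<in>W. lam a \<beta> * b) = (\<Sum>\<beta>\<in>W. lam a \<beta>) * b"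
    by (simp add: sum_distrib_right)
  have "(\<Sum>\<beta>\<in>W. lam a \<beta> * (b - u \<bullet> emb \<beta>)) = (\<Sum>\<beta>\<in>W. lam a \<beta>) * b - u \<bullet> (\<Sum>\<beta>\<in>W. lam a \<beta> *\<^sub>R emb \<beta>)"
    by (simp only: i1 i2 i3)
  also have "\<dots> = 0" using sum1 comb ub(2) by simp
  finally have "(\<Sum>\<beta>\<in>W. lam a \<beta> * (b - u \<bullet> emb \<beta>)) = 0" .
  moreover have nn: "\<And>\<beta>. \<beta> \<in> W \<Longrightarrow> lam a \<beta> * (b - u \<bullet> emb \<beta>) \<ge> 0"
    using pos le by (simp add: less_imp_le)
  ultimately have "\<forall>\<beta>\<in>W. lam a \<beta> * (b - u \<bullet> emb \<beta>) = 0"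
    using sum_nonneg_eq_0_iff[OF fin nn] by simp
  then have "lam a \<alpha> * (b - u \<bullet> emb \<alpha>) = 0" using \<alpha>W W_def by blast
  then have "u \<bullet> emb \<alpha> = b" using pos[of \<alpha>] \<alpha>W W_def by simp
  then have "\<alpha> \<noteq> (\<lambda>_. 0)" using ub(3) by auto
  then show "\<alpha> \<in> Vv c" using W0 \<alpha>W W_def by (auto simp: Vv_def)
qed

lemma rest_scale:
  assumes "is_poly c" and \<beta>: "\<beta> \<in> supp_poly c" "\<beta> \<notin> Vv c" "\<beta> \<notin> gem_deg c"
  shows "\<exists>t>1. t *\<^sub>R emb \<beta> \<in> newton_inf c"
proof -
  define P where "P = newton_inf c"
  have poly: "polyhedron P" unfolding P_def
    by (rule polytope_imp_polyhedron[OF newton_polytope[OF assms(1)]])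
  then obtain F where F: "finite F" "P = \<Inter>F" "\<forall>h\<in>F. \<exists>a b. a \<noteq> 0 \<and> h = {x. a \<bullet> x \<le> b}"
    by (auto simp: polyhedron_def)
  have eP: "emb \<beta> \<in> P" unfolding P_def using \<beta>(1) by (intro emb_in_newton) auto
  have 0: "0 \<in> P" unfolding P_def by (rule zero_in_newton)
  have ev: "\<forall>h\<in>F. eventually (\<lambda>t. t *\<^sub>R emb \<beta> \<in> h) (at_right 1)"
  proof
    fix h assume h: "h \<in> F"
    then obtain a b where ab: "h = {x. a \<bullet> x \<le> b}" using F(3) by blast
    have Ph: "P \<subseteq> h" using h F(2) by blast
    have le: "a \<bullet> emb \<beta> \<le> b" using Ph eP ab by blast
    have b0: "0 \<le> b" using Ph 0 ab by auto
    show "eventually (\<lambda>t. t *\<^sub>R emb \<beta> \<in> h) (at_right 1)"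
    proof (cases "a \<bullet> emb \<beta> < b")
      case True
      have "((\<lambda>t. t * (a \<bullet> emb \<beta>)) \<longlongrightarrow> 1 * (a \<bullet> emb \<beta>)) (at_right 1)"
        by (intro tendsto_intros)
      then have "eventually (\<lambda>t. t * (a \<bullet> emb \<beta>) < b) (at_right 1)"
        using True by (intro order_tendstoD(2)) auto
      then show ?thesis by eventually_elim (simp add: ab)
    next
      case False
      then have eq: "a \<bullet> emb \<beta> = b" using le by simp
      define G where "G = P \<inter> {x. a \<bullet> x = b}"
      have "G face_of P" unfolding G_def
        by (rule face_of_Int_supporting_hyperplane_le) (use Ph ab newton_convex in \<open>auto simp: P_def\<close>)
      moreover have "emb \<beta> \<in> G" using eP eq by (simp add: G_def)
      ultimately have "0 \<in> G"
        using \<beta> by (auto simp: gem_deg_def Gfaces_def Vc_def P_def)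
      then have "b = 0" by (simp add: G_def)
      then have "a \<bullet> emb \<beta> = 0" using eq by simp
      then show ?thesis by (simp add: ab \<open>b = 0\<close>)
    qed
  qed
  have "eventually (\<lambda>t. 1 < t \<and> (\<forall>h\<in>F. t *\<^sub>R emb \<beta> \<in> h)) (at_right (1::real))"
    using eventually_at_right_less eventually_ball_finite[OF F(1) ev]
    by (rule eventually_conj)
  then obtain t where "1 < t" "\<forall>h\<in>F. t *\<^sub>R emb \<beta> \<in> h"
    using eventually_happens'[OF trivial_limit_at_right_real] by blast
  then show ?thesis using F(2) P_def by auto
qed


definition Lf :: "(('n::finite \<Rightarrow> nat) \<Rightarrow> real) \<Rightarrow> real^'n \<Rightarrow> real" where
  "Lf c x = 1 + (\<Sum>\<alpha>\<in>Vv c. absmon x \<alpha>)"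

lemma Lf_ge: "is_poly c \<Longrightarrow> \<alpha> \<in> Vv c \<Longrightarrow> absmon x \<alpha> \<le> Lf c x"
proof -
  assume p: "is_poly c" and a: "\<alpha> \<in> Vv c"
  have fin: "finite (Vv c)" using p Vv_sub[of c] by (auto simp: is_poly_def intro: finite_subset)
  have "absmon x \<alpha> \<le> (\<Sum>\<alpha>\<in>Vv c. absmon x \<alpha>)"
    by (rule member_le_sum[OF a _ fin]) (simp add: absmon_nonneg)
  then show ?thesis by (simp add: Lf_def)
qed

lemma Lf_ge1: "1 \<le> Lf c x"
  by (simp add: Lf_def sum_nonneg absmon_nonneg)

lemma rest_bound:
  assumes p: "is_poly c" and \<beta>: "\<beta> \<in> supp_poly c" "\<beta> \<notin> Vv c" "\<beta> \<notin> gem_deg c"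
  shows "\<exists>\<theta><1. \<forall>x. absmon x \<beta> \<le> Lf c x powr \<theta>"
proof -
  obtain t where t: "t > 1" "t *\<^sub>R emb \<beta> \<in> newton_inf c"
    using rest_scale[OF assms] by blast
  have finV0: "finite (V0 c)" by (rule V0_finite[OF p])
  have "t *\<^sub>R emb \<beta> \<in> convex hull (emb ` V0 c)" using t(2) newton_hull_V0[OF p] by simp
  then obtain u' where u': "\<forall>y\<in>emb ` V0 c. 0 \<le> u' y" "sum u' (emb ` V0 c) = 1"
      "(\<Sum>y\<in>emb ` V0 c. u' y *\<^sub>R y) = t *\<^sub>R emb \<beta>"
    unfolding convex_hull_finite[OF finite_imageI[OF finV0]] by blast
  define u where "u \<alpha> = u' (emb \<alpha>)" for \<alpha>
  have inj: "inj_on emb (V0 c)" by (auto intro: inj_onI emb_inj)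
  have u0: "\<And>\<alpha>. \<alpha> \<in> V0 c \<Longrightarrow> 0 \<le> u \<alpha>" using u'(1) by (simp add: u_def)
  have u1: "(\<Sum>\<alpha>\<in>V0 c. u \<alpha>) = 1" using u'(2) by (simp add: sum.reindex[OF inj] u_def)
  have u2: "(\<Sum>\<alpha>\<in>V0 c. u \<alpha> *\<^sub>R emb \<alpha>) = t *\<^sub>R emb \<beta>"
    using u'(3) by (simp add: sum.reindex[OF inj] u_def)
  define W where "W = {\<alpha>\<in>Vv c. u \<alpha> > 0}"
  define w where "w \<alpha> = u \<alpha> / t" for \<alpha>
  have VvV0: "Vv c \<subseteq> V0 c" by (auto simp: Vv_def)
  have WV: "W \<subseteq> Vv c" by (auto simp: W_def)
  have finVv: "finite (Vv c)" using finV0 VvV0 finite_subset by blast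
  have finW: "finite W" using finVv WV finite_subset by blast
  have wpos: "\<forall>\<alpha>\<in>W. w \<alpha> > 0" using t(1) by (auto simp: W_def w_def)
  have comb: "\<forall>i. real (\<beta> i) = (\<Sum>\<alpha>\<in>W. w \<alpha> * real (\<alpha> i))"
  proof
    fix i
    have "t * real (\<beta> i) = (\<Sum>\<alpha>\<in>V0 c. u \<alpha> * real (\<alpha> i))"
      using arg_cong[OF u2, of "\<lambda>v. v $ i"] by simp
    also have "\<dots> = (\<Sum>\<alpha>\<in>Vv c. u \<alpha> * real (\<alpha> i))"
      by (rule sum.mono_neutral_right[OF finV0 VvV0]) (auto simp: Vv_def)
    also have "\<dots> = (\<Sum>\<alpha>\<in>W. u \<alpha> * real (\<alpha> i))"
      by (rule sum.mono_neutral_right[OF finVv WV]) (use u0 VvV0 in \<open>force simp: W_def\<close>)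
    finally have "t * real (\<beta> i) = (\<Sum>\<alpha>\<in>W. u \<alpha> * real (\<alpha> i))" .
    then have "real (\<beta> i) = (\<Sum>\<alpha>\<in>W. u \<alpha> * real (\<alpha> i)) / t" using t(1) by (simp add: field_simps)
    also have "\<dots> = (\<Sum>\<alpha>\<in>W. w \<alpha> * real (\<alpha> i))"
      by (simp add: w_def sum_divide_distrib)
    finally show "real (\<beta> i) = (\<Sum>\<alpha>\<in>W. w \<alpha> * real (\<alpha> i))" .
  qed
  have wsum: "(\<Sum>\<alpha>\<in>W. w \<alpha>) \<le> 1 / t"
  proof -
    have "(\<Sum>\<alpha>\<in>W. u \<alpha>) \<le> (\<Sum>\<alpha>\<in>V0 c. u \<alpha>)"
      by (rule sum_mono2[OF finV0]) (use WV VvV0 u0 in auto)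
    then have "(\<Sum>\<alpha>\<in>W. u \<alpha>) / t \<le> 1 / t" using u1 t(1) by (simp add: divide_right_mono)
    then show ?thesis by (simp add: w_def sum_divide_distrib)
  qed
  have "\<forall>x. absmon x \<beta> \<le> Lf c x powr (1 / t)"
  proof
    fix x
    have "absmon x \<beta> = (\<Prod>\<alpha>\<in>W. absmon x \<alpha> powr w \<alpha>)"
      by (rule absmon_powr[OF finW wpos comb])
    also have "\<dots> \<le> (\<Prod>\<alpha>\<in>W. Lf c x powr w \<alpha>)"
    proof (rule prod_mono)
      fix \<alpha> assume "\<alpha> \<in> W"
      then show "0 \<le> absmon x \<alpha> powr w \<alpha> \<and> absmon x \<alpha> powr w \<alpha> \<le> Lf c x powr w \<alpha>"
        using wpos WV Lf_ge[OF p, of \<alpha> x] absmon_nonneg[of x \<alpha>]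
        by (auto intro!: powr_mono2 simp: less_imp_le)
    qed
    also have "\<dots> = Lf c x powr (\<Sum>\<alpha>\<in>W. w \<alpha>)"
      using Lf_ge1[of c x] by (simp add: powr_sum)
    also have "\<dots> \<le> Lf c x powr (1 / t)"
      by (rule powr_mono[OF wsum Lf_ge1])
    finally show "absmon x \<beta> \<le> Lf c x powr (1 / t)" .
  qed
  moreover have "1 / t < 1" using t(1) by simp
  ultimately show ?thesis by blast
qed

lemma circuit_bound:
  assumes p: "is_poly c" and C2: "C2 c" and mb: "min_bary_map c lam" and a: "a \<in> gem_deg c"
  shows "circuit_number c lam a > 0"
    and "circuit_number c lam a * absmon x a \<le> (\<Sum>\<alpha>\<in>Vv c. c \<alpha> * absmon x \<alpha>)"
proof -
  define W where "W = bary_support c lam a"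
  have WV: "W \<subseteq> Vv c" unfolding W_def by (rule gem_deg_support[OF p a mb])
  have finVv: "finite (Vv c)" using p Vv_sub[of c] by (auto simp: is_poly_def intro: finite_subset)
  have finW: "finite W" using finVv WV finite_subset by blast
  have aV: "a \<in> V0c c" using gem_deg_V0c[OF a] .
  have mbA: "(\<Sum>\<alpha>\<in>bary_support c lam a. lam a \<alpha>) = 1 \<and>
        (\<Sum>\<alpha>\<in>bary_support c lam a. lam a \<alpha> *\<^sub>R emb \<alpha>) = emb a"
    using mb aV unfolding min_bary_map_def by blast
  have sum1: "(\<Sum>\<beta>\<in>W. lam a \<beta>) = 1" and combv: "(\<Sum>\<beta>\<in>W. lam a \<beta> *\<^sub>R emb \<beta>) = emb a"
    using mbA unfolding W_def by blast+
  have pos: "\<And>\<beta>. \<beta> \<in> W \<Longrightarrow> lam a \<beta> > 0" by (simp add: W_def bary_support_def)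
  have cpos: "\<And>\<beta>. \<beta> \<in> W \<Longrightarrow> c \<beta> > 0" using C2 WV by (auto simp: C2_def)
  have Wne: "W \<noteq> {}" using sum1 by auto
  have comb: "\<forall>i. real (a i) = (\<Sum>\<alpha>\<in>W. lam a \<alpha> * real (\<alpha> i))"
  proof
    fix i show "real (a i) = (\<Sum>\<alpha>\<in>W. lam a \<alpha> * real (\<alpha> i))"
      using arg_cong[OF combv, of "\<lambda>v. v $ i"] by simp
  qed
  have th: "circuit_number c lam a = (\<Prod>\<alpha>\<in>W. (c \<alpha> / lam a \<alpha>) powr (lam a \<alpha>))"
    by (simp add: circuit_number_def W_def)
  show "circuit_number c lam a > 0"
    unfolding th by (rule prod_pos) (use pos cpos in \<open>fastforce\<close>)
  have "circuit_number c lam a * absmon x a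
      = (\<Prod>\<alpha>\<in>W. (c \<alpha> / lam a \<alpha>) powr (lam a \<alpha>)) * (\<Prod>\<alpha>\<in>W. absmon x \<alpha> powr lam a \<alpha>)"
    unfolding th using absmon_powr[OF finW, of "lam a" a x] pos comb by simp
  also have "\<dots> = (\<Prod>\<alpha>\<in>W. (c \<alpha> / lam a \<alpha> * absmon x \<alpha>) powr (lam a \<alpha>))"
    by (simp only: powr_mult prod.distrib)
  also have "\<dots> \<le> (\<Sum>\<alpha>\<in>W. lam a \<alpha> * (c \<alpha> / lam a \<alpha> * absmon x \<alpha>))"
  proof (rule weighted_amgm[OF finW Wne pos sum1])
    fix \<alpha> assume "\<alpha> \<in> W"
    then have "0 \<le> c \<alpha> / lam a \<alpha>" using pos cpos by (simp add: less_imp_le)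
    then show "0 \<le> c \<alpha> / lam a \<alpha> * absmon x \<alpha>" using absmon_nonneg by (rule mult_nonneg_nonneg)
  qed
  also have "\<dots> = (\<Sum>\<alpha>\<in>W. c \<alpha> * absmon x \<alpha>)"
  proof (rule sum.cong)
    fix \<alpha> assume "\<alpha> \<in> W"
    then have "lam a \<alpha> \<noteq> 0" using pos by (metis less_irrefl)
    then show "lam a \<alpha> * (c \<alpha> / lam a \<alpha> * absmon x \<alpha>) = c \<alpha> * absmon x \<alpha>" by simp
  qed simp
  also have "\<dots> \<le> (\<Sum>\<alpha>\<in>Vv c. c \<alpha> * absmon x \<alpha>)"
    by (rule sum_mono2[OF finVv WV]) (use C2 in \<open>auto simp: C2_def absmon_nonneg less_imp_le\<close>)
  finally show "circuit_number c lam a * absmon x a \<le> (\<Sum>\<alpha>\<in>Vv c. c \<alpha> * absmon x \<alpha>)" .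
qed


definition mon :: "real^'n::finite \<Rightarrow> ('n \<Rightarrow> nat) \<Rightarrow> real" where
  "mon x a = (\<Prod>i\<in>UNIV. (x$i) ^ a i)"

lemma abs_mon: "\<bar>mon x a\<bar> = absmon x a"
  by (simp add: mon_def absmon_def abs_prod power_abs)

lemma even_mon_eq: "even_mon a \<Longrightarrow> mon x a = absmon x a"
  by (simp add: mon_def absmon_def even_mon_def power_even_abs)

lemma mon_lower: "c * mon x a \<ge> - \<bar>c\<bar> * absmon x a"
proof -
  have "\<bar>c * mon x a\<bar> = \<bar>c\<bar> * absmon x a" by (simp add: abs_mult abs_mon)
  moreover have "- \<bar>c * mon x a\<bar> \<le> c * mon x a" by (rule abs_ge_minus_self[THEN iffD1[OF minus_le_iff]])
  ultimately show ?thesis by simp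
qed

lemma h_lim:
  fixes A K \<theta> :: real
  assumes "A > 0" "\<theta> < 1"
  shows "filterlim (\<lambda>L. A * (L - 1) - K * L powr \<theta>) at_top at_top"
proof -
  have "((\<lambda>L. L powr (\<theta> - 1)) \<longlongrightarrow> 0) at_top"
    by (rule tendsto_neg_powr) (use assms in \<open>auto simp: filterlim_ident\<close>)
  then have t: "((\<lambda>L. A - K * L powr (\<theta> - 1)) \<longlongrightarrow> A - K * 0) at_top"
    by (intro tendsto_diff tendsto_const tendsto_mult)
  have "filterlim (\<lambda>L. (A - K * L powr (\<theta> - 1)) * L) at_top at_top"
    by (rule filterlim_tendsto_pos_mult_at_top[OF t]) (use assms in \<open>auto intro: filterlim_ident\<close>)
  then have "filterlim (\<lambda>L. - A + (A - K * L powr (\<theta> - 1)) * L) at_top at_top"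
    by (rule filterlim_tendsto_add_at_top[OF tendsto_const])
  then show ?thesis
  proof (rule filterlim_at_top_mono)
    show "\<forall>\<^sub>F L in at_top. - A + (A - K * L powr (\<theta> - 1)) * L \<le> A * (L - 1) - K * L powr \<theta>"
      using eventually_gt_at_top[of "0::real"]
    proof eventually_elim
      case (elim L)
      have e1: "L powr 1 = L" using elim by simp
      have "L powr \<theta> = L powr ((\<theta> - 1) + 1)" by simp
      also have "\<dots> = L powr (\<theta> - 1) * L powr 1" by (rule powr_add)
      also have "\<dots> = L powr (\<theta> - 1) * L" by (simp only: e1)
      finally have "L powr \<theta> = L powr (\<theta> - 1) * L" .
      then show ?case by (simp add: algebra_simps)
    qed
  qed
qed

lemma Lf_abs:
  assumes p: "is_poly c" and C3: "C3 c"
  shows "\<bar>x$i\<bar> \<le> Lf c x"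
proof -
  obtain k::nat where k: "k > 0" "(\<lambda>j. if j = i then 2 * k else 0) \<in> Vv c"
    using C3 by (auto simp: C3_def)
  define e where "e = (\<lambda>j. if j = i then 2 * k else (0::nat))"
  have "(\<lambda>j. \<bar>x$j\<bar> ^ e j) = (\<lambda>j. if j = i then \<bar>x$i\<bar> ^ (2 * k) else 1)"
    by (auto simp: e_def fun_eq_iff)
  then have ae: "absmon x e = \<bar>x$i\<bar> ^ (2 * k)" unfolding absmon_def by (simp only:) simp
  have le: "absmon x e \<le> Lf c x" using Lf_ge[OF p] k(2) e_def by simp
  show ?thesis
  proof (cases "\<bar>x$i\<bar> \<ge> 1")
    case True
    then have "\<bar>x$i\<bar> ^ 1 \<le> \<bar>x$i\<bar> ^ (2 * k)" using k(1) by (intro power_increasing) auto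
    then show ?thesis using ae le by simp
  next
    case False
    then show ?thesis using Lf_ge1[of c x] by simp
  qed
qed

lemma Lf_lim:
  assumes p: "is_poly c" and C3: "C3 (c :: ('n::finite \<Rightarrow> nat) \<Rightarrow> real)"
  shows "filterlim (Lf c) at_top at_infinity"
  unfolding filterlim_at_top eventually_at_infinity
proof (intro allI exI allI impI)
  fix Z :: real and x :: "real^'n"
  assume n: "Z * real CARD('n) \<le> norm x"
  have "norm x \<le> (\<Sum>i\<in>UNIV. \<bar>x$i\<bar>)" by (rule norm_le_l1_cart)
  also have "\<dots> \<le> (\<Sum>i\<in>(UNIV::'n set). Lf c x)" by (rule sum_mono) (rule Lf_abs[OF p C3])
  also have "\<dots> = real CARD('n) * Lf c x" by simp
  finally have "Z * real CARD('n) \<le> real CARD('n) * Lf c x" using n by linarith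
  then show "Z \<le> Lf c x" by (simp add: mult.commute)
qed


theorem mainTheorem3:
  fixes c :: "('n::finite \<Rightarrow> nat) \<Rightarrow> real"
    and lam :: "('n \<Rightarrow> nat) \<Rightarrow> ('n \<Rightarrow> nat) \<Rightarrow> real"
  assumes "is_poly c" and "C1 c" and "C2 c" and "C3 c"
    and "min_bary_map c lam"
    and "(\<Sum>a\<in>gem_deg c \<inter> {a. \<not> even_mon a}. \<bar>c a\<bar> / circuit_number c lam a)
         - (\<Sum>a\<in>gem_deg c \<inter> {a. even_mon a}. min 0 (c a) / circuit_number c lam a) < 1"
  shows "filterlim (peval c) at_top at_infinity"
proof -
  note p = assms(1) and C1 = assms(2) and C2 = assms(3) and C3 = assms(4)
    and mb = assms(5) and hyp = assms(6)
  define V where "V = Vv c"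
  define D where "D = gem_deg c"
  define R where "R = supp_poly c - V - D"
  define S where "S x = (\<Sum>\<alpha>\<in>V. c \<alpha> * absmon x \<alpha>)" for x
  define t where "t a = (if even_mon a then - min 0 (c a) else \<bar>c a\<bar>) / circuit_number c lam a" for a
  define T where "T = (\<Sum>a\<in>D. t a)"
  have fin: "finite (supp_poly c)" using p by (simp add: is_poly_def)
  have VS: "V \<subseteq> supp_poly c" using Vv_sub by (simp add: V_def)
  have DS: "D \<subseteq> supp_poly c - V" by (auto simp: D_def V_def gem_deg_def Vc_def)
  have finV: "finite V" using fin VS finite_subset by blast
  have finD: "finite D" using fin DS finite_subset by blast
  have finR: "finite R" using fin by (simp add: R_def)
  have split: "peval c x = (\<Sum>\<alpha>\<in>V. c \<alpha> * mon x \<alpha>) + (\<Sum>\<alpha>\<in>D. c \<alpha> * mon x \<alpha>) + (\<Sum>\<alpha>\<in>R. c \<alpha> * mon x \<alpha>)"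
    for x
  proof -
    have "peval c x = (\<Sum>\<alpha>\<in>supp_poly c. c \<alpha> * mon x \<alpha>)" by (simp add: peval_def mon_def)
    also have "\<dots> = (\<Sum>\<alpha>\<in>supp_poly c - V. c \<alpha> * mon x \<alpha>) + (\<Sum>\<alpha>\<in>V. c \<alpha> * mon x \<alpha>)"
      by (rule sum.subset_diff[OF VS fin])
    also have "(\<Sum>\<alpha>\<in>supp_poly c - V. c \<alpha> * mon x \<alpha>) = (\<Sum>\<alpha>\<in>R. c \<alpha> * mon x \<alpha>) + (\<Sum>\<alpha>\<in>D. c \<alpha> * mon x \<alpha>)"
      unfolding R_def by (rule sum.subset_diff[OF DS]) (use fin in simp)
    finally show ?thesis by simp
  qed
  have T1: "T < 1"
  proof -
    have "T = (\<Sum>a\<in>D \<inter> {a. even_mon a}. t a) + (\<Sum>a\<in>D - {a. even_mon a}. t a)"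
      unfolding T_def by (rule sum.Int_Diff[OF finD])
    also have "(\<Sum>a\<in>D \<inter> {a. even_mon a}. t a) = - (\<Sum>a\<in>D \<inter> {a. even_mon a}. min 0 (c a) / circuit_number c lam a)"
      by (simp add: t_def sum_negf[symmetric])
    also have "D - {a. even_mon a} = D \<inter> {a. \<not> even_mon a}" by auto
    also have "(\<Sum>a\<in>D \<inter> {a. \<not> even_mon a}. t a) = (\<Sum>a\<in>D \<inter> {a. \<not> even_mon a}. \<bar>c a\<bar> / circuit_number c lam a)"
      by (rule sum.cong) (auto simp: t_def)
    finally show ?thesis using hyp by (simp add: D_def)
  qed
  have tnn: "t a \<ge> 0" if "a \<in> D" for a
    using circuit_bound(1)[OF p C2 mb, of a] that by (auto simp: t_def D_def)
  have Dbound: "c a * mon x a \<ge> - t a * S x" if a: "a \<in> D" for a x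
  proof -
    define k where "k = (if even_mon a then - min 0 (c a) else \<bar>c a\<bar>)"
    have th: "circuit_number c lam a > 0" using circuit_bound(1)[OF p C2 mb] a by (simp add: D_def)
    have cb: "circuit_number c lam a * absmon x a \<le> S x"
      using circuit_bound(2)[OF p C2 mb] a by (simp add: D_def S_def V_def)
    have kt: "k = t a * circuit_number c lam a" using th by (simp add: t_def k_def)
    have "c a * mon x a \<ge> - k * absmon x a"
    proof (cases "even_mon a")
      case True
      then have me: "mon x a = absmon x a" by (rule even_mon_eq)
      have "min 0 (c a) * absmon x a \<le> c a * absmon x a"
        by (rule mult_right_mono) (simp_all add: absmon_nonneg)
      then show ?thesis using True me by (simp add: k_def)
    next
      case False
      then show ?thesis using mon_lower[of "c a" x a] by (simp add: k_def)
    qed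
    moreover have "k * absmon x a \<le> t a * S x"
    proof -
      have "k * absmon x a = t a * (circuit_number c lam a * absmon x a)" by (simp add: kt)
      also have "\<dots> \<le> t a * S x" by (rule mult_left_mono[OF cb tnn[OF a]])
      finally show ?thesis .
    qed
    ultimately show ?thesis by linarith
  qed
  have Dsum: "(\<Sum>a\<in>D. c a * mon x a) \<ge> - T * S x" for x
  proof -
    have "(\<Sum>a\<in>D. - t a * S x) \<le> (\<Sum>a\<in>D. c a * mon x a)"
      by (rule sum_mono) (rule Dbound)
    moreover have "(\<Sum>a\<in>D. - t a * S x) = - T * S x"
      by (simp add: T_def sum_distrib_right sum_negf)
    ultimately show ?thesis by simp
  qed
  have "\<forall>\<beta>\<in>R. \<exists>\<theta><1. \<forall>x. absmon x \<beta> \<le> Lf c x powr \<theta>"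
  proof
    fix \<beta> assume "\<beta> \<in> R"
    then have "\<beta> \<in> supp_poly c" "\<beta> \<notin> Vv c" "\<beta> \<notin> gem_deg c" by (auto simp: R_def V_def D_def)
    then show "\<exists>\<theta><1. \<forall>x. absmon x \<beta> \<le> Lf c x powr \<theta>" by (rule rest_bound[OF p])
  qed
  then obtain th where th: "\<forall>\<beta>\<in>R. th \<beta> < 1 \<and> (\<forall>x. absmon x \<beta> \<le> Lf c x powr th \<beta>)"
    using bchoice[of R "\<lambda>\<beta> \<theta>. \<theta> < 1 \<and> (\<forall>x. absmon x \<beta> \<le> Lf c x powr \<theta>)"] by blast
  define \<theta> where "\<theta> = Max (insert 0 (th ` R))"
  define K where "K = (\<Sum>\<beta>\<in>R. \<bar>c \<beta>\<bar>)"
  have \<theta>1: "\<theta> < 1" unfolding \<theta>_def using finR th by (subst Max_less_iff) auto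
  have th\<theta>: "th \<beta> \<le> \<theta>" if "\<beta> \<in> R" for \<beta>
    unfolding \<theta>_def using finR that by (intro Max_ge) auto
  have Rsum: "(\<Sum>\<beta>\<in>R. c \<beta> * mon x \<beta>) \<ge> - K * Lf c x powr \<theta>" for x
  proof -
    have "(\<Sum>\<beta>\<in>R. - \<bar>c \<beta>\<bar> * Lf c x powr \<theta>) \<le> (\<Sum>\<beta>\<in>R. c \<beta> * mon x \<beta>)"
    proof (rule sum_mono)
      fix \<beta> assume b: "\<beta> \<in> R"
      have "absmon x \<beta> \<le> Lf c x powr th \<beta>" using th b by blast
      also have "\<dots> \<le> Lf c x powr \<theta>" by (rule powr_mono[OF th\<theta>[OF b] Lf_ge1])
      finally have "\<bar>c \<beta>\<bar> * absmon x \<beta> \<le> \<bar>c \<beta>\<bar> * Lf c x powr \<theta>"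
        by (rule mult_left_mono) simp
      then show "- \<bar>c \<beta>\<bar> * Lf c x powr \<theta> \<le> c \<beta> * mon x \<beta>"
        using mon_lower[of "c \<beta>" x \<beta>] by linarith
    qed
    moreover have "(\<Sum>\<beta>\<in>R. - \<bar>c \<beta>\<bar> * Lf c x powr \<theta>) = - K * Lf c x powr \<theta>"
      by (simp add: K_def sum_distrib_right sum_negf)
    ultimately show ?thesis by simp
  qed
  have Vsum: "(\<Sum>\<alpha>\<in>V. c \<alpha> * mon x \<alpha>) = S x" for x
    unfolding S_def by (rule sum.cong) (use C1 in \<open>auto simp: V_def C1_def even_mon_eq\<close>)
  define m where "m = Min (insert 1 (c ` V))"
  have m0: "m > 0" unfolding m_def using finV C2 by (subst Min_gr_iff) (auto simp: V_def C2_def)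
  have mle: "m \<le> c \<alpha>" if "\<alpha> \<in> V" for \<alpha>
    unfolding m_def using finV that by (intro Min_le) auto
  have Sbound: "S x \<ge> m * (Lf c x - 1)" for x
  proof -
    have "m * (Lf c x - 1) = (\<Sum>\<alpha>\<in>V. m * absmon x \<alpha>)"
      by (simp add: Lf_def V_def sum_distrib_left)
    also have "\<dots> \<le> S x" unfolding S_def
      by (rule sum_mono) (use mle absmon_nonneg in \<open>blast intro: mult_right_mono\<close>)
    finally show ?thesis .
  qed
  define A where "A = (1 - T) * m"
  have A0: "A > 0" using T1 m0 by (simp add: A_def)
  have lower: "peval c x \<ge> A * (Lf c x - 1) - K * Lf c x powr \<theta>" for x
  proof -
    have S0: "S x \<ge> 0" unfolding S_def
      using C2 by (intro sum_nonneg) (auto simp: V_def C2_def absmon_nonneg)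
    have "A * (Lf c x - 1) \<le> (1 - T) * S x"
      unfolding A_def using Sbound[of x] T1 by (simp add: mult.assoc mult_left_mono)
    then show ?thesis using split[of x] Vsum[of x] Dsum[of x] Rsum[of x] by (simp add: algebra_simps)
  qed
  have "filterlim (\<lambda>x. A * (Lf c x - 1) - K * Lf c x powr \<theta>) at_top at_infinity"
    using filterlim_compose[OF h_lim[OF A0 \<theta>1, of K] Lf_lim[OF p C3]] by simp
  then show ?thesis
    by (rule filterlim_at_top_mono) (use lower in simp)
qed

end
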